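(* Let $k\ge 2$ be an integer and let $P=(p_{ij})$ be the $2^k\times 2^k$ matrix with $p_{ij}=1$ if there is $n\in\{1,\dots,2^k\}$ with $i=\sigma^{-1}_{2^k}(n)$ and $j=\sigma^{-1}_{2^k}(n-1)$ (with the convention $\sigma^{-1}_{2^k}(0)=\sigma^{-1}_{2^k}(2^k)$), and $p_{ij}=0$ otherwise. Then: (i) for every $m=1,\dots,2^{k-2}$, the position $(\sigma^{-1}_{2^k}(4m-3),\sigma^{-1}_{2^k}(4m-4))$ lies in rows $1,\dots,2^{k-2}$ and columns $2^{k-1}+1,\dots,2^{k-1}+2^{k-2}$; (ii) for every $m=1,\dots,2^{k-2}$, the position $(\sigma^{-1}_{2^k}(4m-1),\sigma^{-1}_{2^k}(4m-2))$ lies in rows $2^{k-2}+1,\dots,2^{k-1}$ and columns $2^{k-1}+2^{k-2}+1,\dots,2^{k}$; (iii) for every $m=1,\dots,2^{k-1}$, the position $(\sigma^{-1}_{2^k}(2m),\sigma^{-1}_{2^k}(2m-1))$ lies in rows $2^{k-1}+1,\dots,2^{k}$ and columns $1,\dots,2^{k-1}$. Consequently, partitioning rows into consecutive groups of sizes $2^{k-2},2^{k-2},2^{k-1}$ and columns into consecutive groups of sizes $2^{k-1},2^{k-2},2^{k-2}$, $$P=\begin{pmatrix}0 & B_{2^{k-2}} & 0\\ 0 & 0 & C_{2^{k-2}}\\ C^*_{2^{k-1}} & 0 & 0\end{pmatrix},$$ where the square blocks $B_{2^{k-2}}$, $C_{2^{k-2}}$, $C^*_{2^{k-1}}$ contain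 exactly the $1$-entries of $P$ at the positions listed in (i), (ii), (iii) respectively, and all other entries of $P$ are zero.
   Context: For every integer $k\ge 0$ the map $\sigma^{-1}_{2^k}:\{1,\dots,2^k\}\to\{1,\dots,2^k\}$ is defined recursively by $\sigma^{-1}_{2^0}(1)=1$ and, for $k\ge 1$ and $1\le n\le 2^{k-1}$, $\sigma^{-1}_{2^k}(2n-1)=\sigma^{-1}_{2^{k-1}}(n)$ and $\sigma^{-1}_{2^k}(2n)=2^k+1-\sigma^{-1}_{2^{k-1}}(n)$; it is a permutation of $\{1,\dots,2^k\}$. The matrix $P$ is the permutation matrix of the permutation $\sigma^{-1}_{2^k}(n+1)\mapsto\sigma^{-1}_{2^k}(n)$ (indices mod $2^k$), i.e. of the inverse of the "disordered permutation" $\sigma^{-1}_{2^k}(n)\mapsto\sigma^{-1}_{2^k}(n+1)$ describing one step of the dynamics on the superstable $2^k$-periodic orbit of a period-doubling cascade. *)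

theory Defs
  imports Main
begin

text \<open>sigma_inv k n is the map sigma^{-1}_{2^k} on {1..2^k} (values outside this range
are irrelevant).\<close>
fun sigma_inv :: "nat \<Rightarrow> nat \<Rightarrow> nat" where
  "sigma_inv 0 n = 1"
| "sigma_inv (Suc k) n =
     (if odd n then sigma_inv k ((n + 1) div 2)
      else 2 ^ Suc k + 1 - sigma_inv k (n div 2))"

definition sigma_inv0 :: "nat \<Rightarrow> nat \<Rightarrow> nat" where
  "sigma_inv0 k n = (if n = 0 then sigma_inv k (2 ^ k) else sigma_inv k n)"

text \<open>The 2^k x 2^k matrix P, indexed by i, j in {1..2^k}.\<close>
definition Pmat :: "nat \<Rightarrow> nat \<Rightarrow> nat \<Rightarrow> nat" where
  "Pmat k i j = (if \<exists>n\<in>{1..2 ^ k}. i = sigma_inv0 k n \<and> j = sigma_inv0 k (n - 1) then 1 else 0)"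

end

theory Submission
  imports Defs
begin

lemma sr: "1 \<le> sigma_inv k n \<and> sigma_inv k n \<le> 2^k"
proof (induction k arbitrary: n)
  case 0 then show ?case by simp
next
  case (Suc k)
  show ?case using Suc[of "(n+1) div 2"] Suc[of "n div 2"] by auto
qed

lemma s1: "(m::nat) \<ge> 1 \<Longrightarrow> sigma_inv (Suc (Suc j)) (4*m-3) = sigma_inv j m"
proof -
  assume "m \<ge> 1"
  have "odd (4*m-3)" using \<open>m\<ge>1\<close> by presburger
  moreover have "(4*m-3+1) div 2 = 2*m-1" using \<open>m\<ge>1\<close> by presburger
  moreover have "odd (2*m-1)" using \<open>m\<ge>1\<close> by presburger
  moreover have "(2*m-1+1) div 2 = m" using \<open>m\<ge>1\<close> by presburger
  ultimately show ?thesis by simp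
qed

lemma s3: "(m::nat) \<ge> 1 \<Longrightarrow> sigma_inv (Suc (Suc j)) (4*m-1) = 2^Suc j + 1 - sigma_inv j m"
proof -
  assume "m \<ge> 1"
  have "odd (4*m-1)" using \<open>m\<ge>1\<close> by presburger
  moreover have "(4*m-1+1) div 2 = 2*m" using \<open>m\<ge>1\<close> by presburger
  ultimately show ?thesis by simp
qed

lemma s2: "(m::nat) \<ge> 1 \<Longrightarrow> sigma_inv (Suc (Suc j)) (4*m-2) = 2^Suc (Suc j) + 1 - sigma_inv j m"
proof -
  assume "m \<ge> 1"
  have "\<not> odd (4*m-2)" using \<open>m\<ge>1\<close> by presburger
  moreover have "(4*m-2) div 2 = 2*m-1" using \<open>m\<ge>1\<close> by presburger
  moreover have "odd (2*m-1)" using \<open>m\<ge>1\<close> by presburger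
  moreover have "(2*m-1+1) div 2 = m" using \<open>m\<ge>1\<close> by presburger
  ultimately show ?thesis by simp
qed

lemma s0: "sigma_inv (Suc (Suc j)) (4*m) = 2^Suc (Suc j) + 1 - (2^Suc j + 1 - sigma_inv j m)"
proof -
  have "\<not> odd (4*m)" by presburger
  moreover have "(4*m) div 2 = 2*m" by presburger
  moreover have "\<not> odd (2*m)" by presburger
  ultimately show ?thesis by simp
qed

lemma sev: "sigma_inv (Suc k) (2*m) = 2^Suc k + 1 - sigma_inv k m"
  by simp

lemma sodd: "(m::nat) \<ge> 1 \<Longrightarrow> sigma_inv (Suc k) (2*m-1) = sigma_inv k m"
proof -
  assume "m \<ge> 1"
  have "odd (2*m-1)" using \<open>m\<ge>1\<close> by presburger
  moreover have "(2*m-1+1) div 2 = m" using \<open>m\<ge>1\<close> by presburger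
  ultimately show ?thesis by simp
qed

lemma s4m4: "(m::nat) \<ge> 1 \<Longrightarrow> m \<le> 2^j \<Longrightarrow>
   sigma_inv0 (Suc (Suc j)) (4*m-4) \<in> {2*2^j+1..2*2^j+2^j}"
proof -
  assume a: "m \<ge> 1" "m \<le> 2^j"
  show ?thesis
  proof (cases "m = 1")
    case True
    have "sigma_inv0 (Suc (Suc j)) (4*m-4) = sigma_inv (Suc (Suc j)) (4*2^j)"
      using True by (simp add: sigma_inv0_def)
    then show ?thesis using s0[of j "2^j"] sr[of j "2^j"] by auto
  next
    case False
    have "4*m-4 = 4*(m-1)" "4*m-4 \<noteq> 0" using a False by auto
    then have "sigma_inv0 (Suc (Suc j)) (4*m-4) = sigma_inv (Suc (Suc j)) (4*(m-1))"
      by (simp add: sigma_inv0_def)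
    then show ?thesis using s0[of j "m-1"] sr[of j "m-1"] by auto
  qed
qed

theorem lemma3:
  fixes k :: nat
  assumes "k \<ge> 2"
  shows "(\<forall>m\<in>{1..2 ^ (k - 2)}.
            sigma_inv0 k (4 * m - 3) \<in> {1..2 ^ (k - 2)} \<and>
            sigma_inv0 k (4 * m - 4) \<in> {2 ^ (k - 1) + 1..2 ^ (k - 1) + 2 ^ (k - 2)})
       \<and> (\<forall>m\<in>{1..2 ^ (k - 2)}.
            sigma_inv0 k (4 * m - 1) \<in> {2 ^ (k - 2) + 1..2 ^ (k - 1)} \<and>
            sigma_inv0 k (4 * m - 2) \<in> {2 ^ (k - 1) + 2 ^ (k - 2) + 1..2 ^ k})
       \<and> (\<forall>m\<in>{1..2 ^ (k - 1)}.
            sigma_inv0 k (2 * m) \<in> {2 ^ (k - 1) + 1..2 ^ k} \<and>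
            sigma_inv0 k (2 * m - 1) \<in> {1..2 ^ (k - 1)})
       \<and> (\<forall>i\<in>{1..2 ^ k}. \<forall>j\<in>{1..2 ^ k}.
            Pmat k i j =
              (if (\<exists>m\<in>{1..2 ^ (k - 2)}.
                     i = sigma_inv0 k (4 * m - 3) \<and> j = sigma_inv0 k (4 * m - 4))
                \<or> (\<exists>m\<in>{1..2 ^ (k - 2)}.
                     i = sigma_inv0 k (4 * m - 1) \<and> j = sigma_inv0 k (4 * m - 2))
                \<or> (\<exists>m\<in>{1..2 ^ (k - 1)}.
                     i = sigma_inv0 k (2 * m) \<and> j = sigma_inv0 k (2 * m - 1))
               then 1 else 0))"
proof -
  obtain t where k: "k = Suc (Suc t)" using assms by (metis add_2_eq_Suc le_Suc_ex)
  have e1: "2^(k-2) = (2::nat)^t" "2^(k-1) = 2*(2::nat)^t" "2^k = 4*(2::nat)^t"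
    using k by auto
  have P1: "\<forall>m\<in>{1..2 ^ (k - 2)}.
            sigma_inv0 k (4 * m - 3) \<in> {1..2 ^ (k - 2)} \<and>
            sigma_inv0 k (4 * m - 4) \<in> {2 ^ (k - 1) + 1..2 ^ (k - 1) + 2 ^ (k - 2)}"
  proof
    fix m :: nat assume m: "m \<in> {1..2 ^ (k - 2)}"
    have "4*m-3 \<noteq> 0" using m by auto
    then show "sigma_inv0 k (4 * m - 3) \<in> {1..2 ^ (k - 2)} \<and>
            sigma_inv0 k (4 * m - 4) \<in> {2 ^ (k - 1) + 1..2 ^ (k - 1) + 2 ^ (k - 2)}"
    proof -
      have a: "sigma_inv0 k (4*m-3) = sigma_inv t m" using \<open>4*m-3 \<noteq> 0\<close> m s1[of m t] k
        by (simp add: sigma_inv0_def del: sigma_inv.simps)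
      show ?thesis using a m sr[of t m] s4m4[of m t] unfolding e1 k by (simp del: sigma_inv.simps)
    qed
  qed
  have P2: "\<forall>m\<in>{1..2 ^ (k - 2)}.
            sigma_inv0 k (4 * m - 1) \<in> {2 ^ (k - 2) + 1..2 ^ (k - 1)} \<and>
            sigma_inv0 k (4 * m - 2) \<in> {2 ^ (k - 1) + 2 ^ (k - 2) + 1..2 ^ k}"
  proof
    fix m :: nat assume m: "m \<in> {1..2 ^ (k - 2)}"
    have "4*m-1 \<noteq> 0" "4*m-2 \<noteq> 0" using m by auto
    then show "sigma_inv0 k (4 * m - 1) \<in> {2 ^ (k - 2) + 1..2 ^ (k - 1)} \<and>
            sigma_inv0 k (4 * m - 2) \<in> {2 ^ (k - 1) + 2 ^ (k - 2) + 1..2 ^ k}"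
    proof -
      have a: "sigma_inv0 k (4*m-1) = 2^Suc t + 1 - sigma_inv t m" using \<open>4*m-1 \<noteq> 0\<close> m s3[of m t] k
        by (simp add: sigma_inv0_def del: sigma_inv.simps)
      have b: "sigma_inv0 k (4*m-2) = 2^Suc (Suc t) + 1 - sigma_inv t m" using \<open>4*m-2 \<noteq> 0\<close> m s2[of m t] k
        by (simp add: sigma_inv0_def del: sigma_inv.simps)
      show ?thesis using a b m sr[of t m] unfolding e1 by (auto simp del: sigma_inv.simps)
    qed
  qed
  have P3: "\<forall>m\<in>{1..2 ^ (k - 1)}.
            sigma_inv0 k (2 * m) \<in> {2 ^ (k - 1) + 1..2 ^ k} \<and>
            sigma_inv0 k (2 * m - 1) \<in> {1..2 ^ (k - 1)}"
  proof
    fix m :: nat assume m: "m \<in> {1..2 ^ (k - 1)}"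
    have "2*m-1 \<noteq> 0" "2*m \<noteq> 0" using m by auto
    then show "sigma_inv0 k (2 * m) \<in> {2 ^ (k - 1) + 1..2 ^ k} \<and>
            sigma_inv0 k (2 * m - 1) \<in> {1..2 ^ (k - 1)}"
    proof -
      have a: "sigma_inv0 k (2*m) = 2^Suc (Suc t) + 1 - sigma_inv (Suc t) m" using \<open>2*m \<noteq> 0\<close> m sev[of "Suc t" m] k
        by (simp add: sigma_inv0_def del: sigma_inv.simps)
      have b: "sigma_inv0 k (2*m-1) = sigma_inv (Suc t) m" using \<open>2*m-1 \<noteq> 0\<close> m sodd[of m "Suc t"] k
        by (simp add: sigma_inv0_def del: sigma_inv.simps)
      show ?thesis using a b m sr[of "Suc t" m] unfolding e1 by (auto simp del: sigma_inv.simps)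
    qed
  qed
  have P4: "(\<exists>n\<in>{1..2 ^ k}. i = sigma_inv0 k n \<and> j = sigma_inv0 k (n - 1)) \<longleftrightarrow>
             ((\<exists>m\<in>{1..2 ^ (k - 2)}.
                     i = sigma_inv0 k (4 * m - 3) \<and> j = sigma_inv0 k (4 * m - 4))
                \<or> (\<exists>m\<in>{1..2 ^ (k - 2)}.
                     i = sigma_inv0 k (4 * m - 1) \<and> j = sigma_inv0 k (4 * m - 2))
                \<or> (\<exists>m\<in>{1..2 ^ (k - 1)}.
                     i = sigma_inv0 k (2 * m) \<and> j = sigma_inv0 k (2 * m - 1)))" for i j
  proof
    assume "\<exists>n\<in>{1..2 ^ k}. i = sigma_inv0 k n \<and> j = sigma_inv0 k (n - 1)"
    then obtain n where n: "n \<in> {1..2^k}" "i = sigma_inv0 k n" "j = sigma_inv0 k (n - 1)" by blast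
    have "n mod 4 = 1 \<or> n mod 4 = 3 \<or> even n" by presburger
    then consider "n mod 4 = 1" | "n mod 4 = 3" | "even n" by blast
    then show "((\<exists>m\<in>{1..2 ^ (k - 2)}.
                     i = sigma_inv0 k (4 * m - 3) \<and> j = sigma_inv0 k (4 * m - 4))
                \<or> (\<exists>m\<in>{1..2 ^ (k - 2)}.
                     i = sigma_inv0 k (4 * m - 1) \<and> j = sigma_inv0 k (4 * m - 2))
                \<or> (\<exists>m\<in>{1..2 ^ (k - 1)}.
                     i = sigma_inv0 k (2 * m) \<and> j = sigma_inv0 k (2 * m - 1)))"
    proof cases
      case 1
      have "(n+3) div 4 \<in> {1..2^(k-2)}"
        using 1 n(1) unfolding e1 by auto
      moreover have "4*((n+3) div 4) - 3 = n" "4*((n+3) div 4) - 4 = n - 1" using 1 by presburger+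
      ultimately show ?thesis using n by metis
    next
      case 2
      have "(n+1) div 4 \<in> {1..2^(k-2)}"
        using 2 n(1) unfolding e1 by auto
      moreover have "4*((n+1) div 4) - 1 = n" "4*((n+1) div 4) - 2 = n - 1" using 2 by presburger+
      ultimately show ?thesis using n by metis
    next
      case 3
      have "n div 2 \<in> {1..2^(k-1)}"
        using 3 n(1) unfolding e1 by auto
      moreover have "2*(n div 2) = n" "2*(n div 2) - 1 = n - 1" using 3 by presburger+
      ultimately show ?thesis using n by metis
    qed
  next
    assume "((\<exists>m\<in>{1..2 ^ (k - 2)}.
                     i = sigma_inv0 k (4 * m - 3) \<and> j = sigma_inv0 k (4 * m - 4))
                \<or> (\<exists>m\<in>{1..2 ^ (k - 2)}.
                     i = sigma_inv0 k (4 * m - 1) \<and> j = sigma_inv0 k (4 * m - 2))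
                \<or> (\<exists>m\<in>{1..2 ^ (k - 1)}.
                     i = sigma_inv0 k (2 * m) \<and> j = sigma_inv0 k (2 * m - 1)))"
    then show "\<exists>n\<in>{1..2 ^ k}. i = sigma_inv0 k n \<and> j = sigma_inv0 k (n - 1)"
    proof (elim disjE bexE conjE)
      fix m :: nat assume m: "m \<in> {1..2 ^ (k - 2)}" "i = sigma_inv0 k (4 * m - 3)" "j = sigma_inv0 k (4 * m - 4)"
      have "4*m-3 \<in> {1..2^k}" "4*m-3-1 = 4*m-4" using m(1) unfolding e1 by auto
      then show ?thesis using m by metis
    next
      fix m :: nat assume m: "m \<in> {1..2 ^ (k - 2)}" "i = sigma_inv0 k (4 * m - 1)" "j = sigma_inv0 k (4 * m - 2)"
      have "4*m-1 \<in> {1..2^k}" "4*m-1-1 = 4*m-2" using m(1) unfolding e1 by auto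
      then show ?thesis using m by metis
    next
      fix m :: nat assume m: "m \<in> {1..2 ^ (k - 1)}" "i = sigma_inv0 k (2 * m)" "j = sigma_inv0 k (2 * m - 1)"
      have "2*m \<in> {1..2^k}" "2*m-1 = 2*m-1" using m(1) unfolding e1 by auto
      then show ?thesis using m by (metis diff_Suc_1 diff_Suc_eq_diff_pred)
    qed
  qed
  show ?thesis using P1 P2 P3 P4 unfolding Pmat_def by simp
qed

end
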